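(* Let $G$ be a group and $N$ a normal subgroup of $G$. If $S=\bigoplus_{g\in G}S_g$ is a nearly epsilon-strongly $G$-graded ring, then the induced $G/N$-grading $\{S_C\}_{C\in G/N}$ is nearly epsilon-strong.
   Context: Rings are associative, not necessarily unital; $AB$ denotes finite sums of products. A $G$-grading: $S=\bigoplus_gS_g$, $S_gS_h\subseteq S_{gh}$. A grading $\{T_h\}_{h\in H}$ is nearly epsilon-strong if $T_hT_{h^{-1}}T_h=T_h$ for all $h$ and each ring $T_hT_{h^{-1}}$ is $s$-unital (every $x$ in a ring $R$ satisfies $x\in xR\cap Rx$); equivalently, for each $h$ and $t\in T_h$ there are $\epsilon\in T_hT_{h^{-1}}$, $\epsilon'\in T_{h^{-1}}T_h$ with $\epsilon t=t=t\epsilon'$. Induced grading: $S_C=\bigoplus_{g\in C}S_g$. *)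

theory Defs
  imports "HOL-Algebra.Coset"
begin

text \<open>Rings are the type class ring (associative, not necessarily unital).
  The graded ring S is the whole carrier type 'a; a grading over a group G
  is a family of subsets indexed by carrier G.\<close>

definition ring_prod :: "'a::ring set \<Rightarrow> 'a set \<Rightarrow> 'a set" where
  "ring_prod A B = {(\<Sum>i\<in>I. a i * b i) | I a b. finite (I::nat set) \<and> (\<forall>i\<in>I. a i \<in> A \<and> b i \<in> B)}"

definition additive_subgroup :: "'a::ring set \<Rightarrow> bool" where
  "additive_subgroup A \<longleftrightarrow> 0 \<in> A \<and> (\<forall>x\<in>A. \<forall>y\<in>A. x + y \<in> A \<and> - x \<in> A)"

definition s_unital :: "'a::ring set \<Rightarrow> bool" where
  "s_unital R \<longleftrightarrow> (\<forall>x\<in>R. x \<in> {x * r | r. r \<in> R} \<and> x \<in> {r * x | r. r \<in> R})"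

definition graded_ring :: "('g, 'b) monoid_scheme \<Rightarrow> ('g \<Rightarrow> 'a::ring set) \<Rightarrow> bool" where
  "graded_ring G S \<longleftrightarrow>
     (\<forall>g\<in>carrier G. additive_subgroup (S g)) \<and>
     (\<forall>g\<in>carrier G. \<forall>h\<in>carrier G. ring_prod (S g) (S h) \<subseteq> S (g \<otimes>\<^bsub>G\<^esub> h)) \<and>
     (\<forall>x::'a. \<exists>!f. (\<forall>g. g \<notin> carrier G \<longrightarrow> f g = 0) \<and> (\<forall>g\<in>carrier G. f g \<in> S g)
                 \<and> finite {g. f g \<noteq> 0} \<and> x = (\<Sum>g\<in>{g. f g \<noteq> 0}. f g))"

definition nearly_epsilon_strong :: "('g, 'b) monoid_scheme \<Rightarrow> ('g \<Rightarrow> 'a::ring set) \<Rightarrow> bool" where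
  "nearly_epsilon_strong G S \<longleftrightarrow> graded_ring G S \<and>
     (\<forall>h\<in>carrier G. ring_prod (ring_prod (S h) (S (inv\<^bsub>G\<^esub> h))) (S h) = S h
                    \<and> s_unital (ring_prod (S h) (S (inv\<^bsub>G\<^esub> h))))"

definition induced_grading :: "('g \<Rightarrow> 'a::ring set) \<Rightarrow> 'g set \<Rightarrow> 'a set" where
  "induced_grading S C = {(\<Sum>g\<in>F. f g) | F f. finite F \<and> F \<subseteq> C \<and> (\<forall>g\<in>F. f g \<in> S g)}"

end

theory Submission
  imports Defs
begin


lemma addsub_0: "additive_subgroup T \<Longrightarrow> 0 \<in> T"
  by (simp add: additive_subgroup_def)
lemma addsub_add: "additive_subgroup T \<Longrightarrow> x \<in> T \<Longrightarrow> y \<in> T \<Longrightarrow> x + y \<in> T"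
  by (simp add: additive_subgroup_def)
lemma addsub_neg: "additive_subgroup T \<Longrightarrow> x \<in> T \<Longrightarrow> - x \<in> T"
  by (simp add: additive_subgroup_def)
lemma addsub_diff: "additive_subgroup T \<Longrightarrow> x \<in> T \<Longrightarrow> y \<in> T \<Longrightarrow> x - y \<in> T"
  by (metis addsub_add addsub_neg diff_conv_add_uminus)

lemma addsub_sum: "additive_subgroup T \<Longrightarrow> (\<And>i. i \<in> I \<Longrightarrow> f i \<in> T) \<Longrightarrow> sum f I \<in> T"
proof (cases "finite I")
  case True
  assume a: "additive_subgroup T" "\<And>i. i \<in> I \<Longrightarrow> f i \<in> T"
  from True a(2) show ?thesis
    by (induction I rule: finite_induct) (auto intro: addsub_add[OF a(1)] addsub_0[OF a(1)])
qed (simp add: addsub_0)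

lemma rp_single: "a \<in> A \<Longrightarrow> b \<in> B \<Longrightarrow> a * b \<in> ring_prod A B"
  unfolding ring_prod_def
  by (rule CollectI, rule exI[of _ "{0::nat}"], rule exI[of _ "\<lambda>_. a"], rule exI[of _ "\<lambda>_. b"]) simp

lemma rp_mono: "A \<subseteq> A' \<Longrightarrow> B \<subseteq> B' \<Longrightarrow> ring_prod A B \<subseteq> ring_prod A' B'"
  unfolding ring_prod_def by blast

lemma rp_sub: assumes "additive_subgroup T" "\<And>a b. a \<in> A \<Longrightarrow> b \<in> B \<Longrightarrow> a * b \<in> T"
  shows "ring_prod A B \<subseteq> T"
  using assms unfolding ring_prod_def by (auto intro!: addsub_sum)

lemma rp_addsub: assumes B: "additive_subgroup B" shows "additive_subgroup (ring_prod A B)"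
  unfolding additive_subgroup_def
proof (intro conjI ballI)
  show "0 \<in> ring_prod A B" unfolding ring_prod_def
    by (rule CollectI, rule exI[of _ "{}::nat set"]) auto
next
  fix x assume "x \<in> ring_prod A B"
  then obtain I a b where x: "finite (I::nat set)" "\<forall>i\<in>I. a i \<in> A \<and> b i \<in> B" "x = (\<Sum>i\<in>I. a i * b i)"
    unfolding ring_prod_def by blast
  have "- x = (\<Sum>i\<in>I. a i * (- b i))" using x(3) by (simp add: sum_negf)
  moreover have "\<forall>i\<in>I. a i \<in> A \<and> - b i \<in> B" using x(2) addsub_neg[OF B] by blast
  ultimately show "- x \<in> ring_prod A B" unfolding ring_prod_def using x(1)
    by (intro CollectI exI[of _ I] exI[of _ a] exI[of _ "\<lambda>i. - b i"]) auto
next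
  fix x y assume "x \<in> ring_prod A B" "y \<in> ring_prod A B"
  then obtain I a b J c d where x: "finite (I::nat set)" "\<forall>i\<in>I. a i \<in> A \<and> b i \<in> B" "x = (\<Sum>i\<in>I. a i * b i)"
    and y: "finite (J::nat set)" "\<forall>i\<in>J. c i \<in> A \<and> d i \<in> B" "y = (\<Sum>i\<in>J. c i * d i)"
    unfolding ring_prod_def by blast
  define K where "K = (\<lambda>i. 2*i) ` I \<union> (\<lambda>i. 2*i+1) ` J"
  define e where "e = (\<lambda>i::nat. if even i then a (i div 2) else c (i div 2))"
  define f where "f = (\<lambda>i::nat. if even i then b (i div 2) else d (i div 2))"
  have disj: "(\<lambda>i. 2*i) ` I \<inter> (\<lambda>i. 2*i+1) ` J = {}" by auto presburger
  have "(\<Sum>i\<in>K. e i * f i) = (\<Sum>i\<in>(\<lambda>i. 2*i) ` I. e i * f i) + (\<Sum>i\<in>(\<lambda>i. 2*i+1) ` J. e i * f i)"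
    unfolding K_def using x(1) y(1) disj by (simp add: sum.union_disjoint)
  also have "\<dots> = x + y"
    by (simp add: sum.reindex inj_on_def x(3) y(3) e_def f_def)
  finally have "x + y = (\<Sum>i\<in>K. e i * f i)" by simp
  moreover have "finite K" using x(1) y(1) K_def by simp
  moreover have "\<forall>i\<in>K. e i \<in> A \<and> f i \<in> B" using x(2) y(2) unfolding K_def e_def f_def by auto
  ultimately show "x + y \<in> ring_prod A B" unfolding ring_prod_def
    by (intro CollectI exI[of _ K] exI[of _ e] exI[of _ f]) auto
qed

lemma lmul_addsub: "additive_subgroup T \<Longrightarrow> additive_subgroup {y. u * y \<in> T}"
  unfolding additive_subgroup_def by (simp add: distrib_left)
lemma rmul_addsub: "additive_subgroup T \<Longrightarrow> additive_subgroup {y. y * u \<in> T}"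
  unfolding additive_subgroup_def by (simp add: distrib_right)

lemma rp_assoc_sub:
  assumes B: "additive_subgroup B" and C: "additive_subgroup C"
  shows "ring_prod (ring_prod A B) C \<subseteq> ring_prod A (ring_prod B C)"
proof (rule rp_sub)
  show "additive_subgroup (ring_prod A (ring_prod B C))" by (rule rp_addsub[OF rp_addsub[OF C]])
  fix x c assume "x \<in> ring_prod A B" "c \<in> C"
  have "ring_prod A B \<subseteq> {y. y * c \<in> ring_prod A (ring_prod B C)}"
  proof (rule rp_sub)
    show "additive_subgroup {y. y * c \<in> ring_prod A (ring_prod B C)}"
      by (rule rmul_addsub, rule rp_addsub[OF rp_addsub[OF C]])
    fix a b assume "a \<in> A" "b \<in> B"
    then show "a * b \<in> {y. y * c \<in> ring_prod A (ring_prod B C)}"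
      using \<open>c \<in> C\<close> by (simp add: mult.assoc rp_single)
  qed
  then show "x * c \<in> ring_prod A (ring_prod B C)" using \<open>x \<in> ring_prod A B\<close> by blast
qed

lemma tominaga_left:
  fixes U :: "'a::ring set"
  assumes cl: "\<And>u v. u \<in> U \<Longrightarrow> v \<in> U \<Longrightarrow> u + v - v * u \<in> U" and z: "0 \<in> U"
    and P1: "\<And>x u. P x \<Longrightarrow> u \<in> U \<Longrightarrow> P (x - u * x)"
    and P2: "\<And>x. P x \<Longrightarrow> \<exists>v\<in>U. v * x = x"
    and fin: "finite I" and a: "\<And>i. i \<in> I \<Longrightarrow> P (a i)"
  shows "\<exists>u\<in>U. \<forall>i\<in>I. u * a i = a i"
  using fin a
proof (induction I rule: finite_induct)
  case empty then show ?case using z by blast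
next
  case (insert j F)
  then obtain u where u: "u \<in> U" "\<forall>i\<in>F. u * a i = a i" by blast
  have "P (a j - u * a j)" using P1 insert.prems u(1) by blast
  then obtain v where v: "v \<in> U" "v * (a j - u * a j) = a j - u * a j" using P2 by blast
  define w where "w = u + v - v * u"
  have "w \<in> U" using cl u(1) v(1) w_def by blast
  moreover have "w * a i = a i" if "i \<in> insert j F" for i
  proof (cases "i = j")
    case True
    have "w * a j = u * a j + v * (a j - u * a j)" unfolding w_def by (simp add: algebra_simps)
    then show ?thesis using v(2) True by simp
  next
    case False
    then have "u * a i = a i" using u(2) that by blast
    moreover have "w * a i = u * a i + v * a i - v * (u * a i)" unfolding w_def by (simp add: algebra_simps)
    ultimately show ?thesis by simp
  qed
  ultimately show ?case by blast
qed

lemma tominaga_right: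
  fixes U :: "'a::ring set"
  assumes cl: "\<And>u v. u \<in> U \<Longrightarrow> v \<in> U \<Longrightarrow> u + v - u * v \<in> U" and z: "0 \<in> U"
    and P1: "\<And>x u. P x \<Longrightarrow> u \<in> U \<Longrightarrow> P (x - x * u)"
    and P2: "\<And>x. P x \<Longrightarrow> \<exists>v\<in>U. x * v = x"
    and fin: "finite I" and a: "\<And>i. i \<in> I \<Longrightarrow> P (a i)"
  shows "\<exists>u\<in>U. \<forall>i\<in>I. a i * u = a i"
  using fin a
proof (induction I rule: finite_induct)
  case empty then show ?case using z by blast
next
  case (insert j F)
  then obtain u where u: "u \<in> U" "\<forall>i\<in>F. a i * u = a i" by blast
  have "P (a j - a j * u)" using P1 insert.prems u(1) by blast
  then obtain v where v: "v \<in> U" "(a j - a j * u) * v = a j - a j * u" using P2 by blast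
  define w where "w = u + v - u * v"
  have "w \<in> U" using cl u(1) v(1) w_def by blast
  moreover have "a i * w = a i" if "i \<in> insert j F" for i
  proof (cases "i = j")
    case True
    have "a j * w = a j * u + (a j - a j * u) * v" unfolding w_def by (simp add: algebra_simps)
    then show ?thesis using v(2) True by simp
  next
    case False
    then have "a i * u = a i" using u(2) that by blast
    moreover have "a i * w = a i * u + a i * v - (a i * u) * v" unfolding w_def by (simp add: algebra_simps)
    ultimately show ?thesis by simp
  qed
  ultimately show ?case by blast
qed



lemma ex1_eq: "\<exists>!x. P x \<Longrightarrow> P a \<Longrightarrow> P b \<Longrightarrow> a = b" by blast

locale nes = normal N G for N :: "'g set" and G :: "('g,'b) monoid_scheme" (structure) +
  fixes S :: "'g \<Rightarrow> 'a::ring set"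
  assumes nes: "nearly_epsilon_strong G S"
begin

abbreviation SI where "SI C \<equiv> induced_grading S C"

lemma gr: "graded_ring G S" using nes unfolding nearly_epsilon_strong_def by blast

lemma sg: "g \<in> carrier G \<Longrightarrow> additive_subgroup (S g)"
  using gr unfolding graded_ring_def by blast

lemma gm: "g \<in> carrier G \<Longrightarrow> h \<in> carrier G \<Longrightarrow> a \<in> S g \<Longrightarrow> b \<in> S h \<Longrightarrow> a * b \<in> S (g \<otimes> h)"
  using gr rp_single unfolding graded_ring_def by blast

lemma dec: "\<exists>!f. (\<forall>g. g \<notin> carrier G \<longrightarrow> f g = 0) \<and> (\<forall>g\<in>carrier G. f g \<in> S g)
                 \<and> finite {g. f g \<noteq> 0} \<and> x = (\<Sum>g\<in>{g. f g \<noteq> 0}. f g)"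
  using gr unfolding graded_ring_def by blast

lemma eps1: "h \<in> carrier G \<Longrightarrow> ring_prod (ring_prod (S h) (S (inv h))) (S h) = S h"
  using nes unfolding nearly_epsilon_strong_def by blast

lemma eps2: "h \<in> carrier G \<Longrightarrow> s_unital (ring_prod (S h) (S (inv h)))"
  using nes unfolding nearly_epsilon_strong_def by blast

lemma indep:
  assumes "\<forall>g. g \<notin> carrier G \<longrightarrow> d g = 0" "\<forall>g\<in>carrier G. d g \<in> S g"
    "finite {g. d g \<noteq> 0}" "(\<Sum>g\<in>{g. d g \<noteq> 0}. d g) = 0"
  shows "d g = 0"
proof -
  have z: "(\<forall>g. g \<notin> carrier G \<longrightarrow> (\<lambda>_. 0) g = (0::'a)) \<and> (\<forall>g\<in>carrier G. (\<lambda>_. 0) g \<in> S g)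
                 \<and> finite {g. (\<lambda>_. 0) g \<noteq> (0::'a)} \<and> 0 = (\<Sum>g\<in>{g. (\<lambda>_. 0) g \<noteq> (0::'a)}. (\<lambda>_. 0) g)"
    using sg addsub_0 by auto
  have "d = (\<lambda>_. 0)" by (rule ex1_eq[OF dec[of 0]]) (use assms z in auto)
  then show ?thesis by simp
qed

lemma si_addsub: assumes C: "C \<subseteq> carrier G" shows "additive_subgroup (SI C)"
  unfolding additive_subgroup_def
proof (intro conjI ballI)
  show "0 \<in> SI C" unfolding induced_grading_def
    by (rule CollectI, rule exI[of _ "{}"]) auto
next
  fix x assume "x \<in> SI C"
  then obtain F f where x: "finite F" "F \<subseteq> C" "\<forall>g\<in>F. f g \<in> S g" "x = sum f F"
    unfolding induced_grading_def by blast
  have "- x = (\<Sum>g\<in>F. - f g)" using x(4) by (simp add: sum_negf)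
  moreover have "\<forall>g\<in>F. - f g \<in> S g"
  proof
    fix g assume "g \<in> F"
    then show "- f g \<in> S g" using x(2,3) C by (intro addsub_neg[OF sg]) auto
  qed
  ultimately show "- x \<in> SI C" unfolding induced_grading_def using x(1,2)
    by (intro CollectI exI[of _ F] exI[of _ "\<lambda>g. - f g"]) auto
next
  fix x y assume "x \<in> SI C" "y \<in> SI C"
  then obtain F f F' f' where x: "finite F" "F \<subseteq> C" "\<forall>g\<in>F. f g \<in> S g" "x = sum f F"
    and y: "finite F'" "F' \<subseteq> C" "\<forall>g\<in>F'. f' g \<in> S g" "y = sum f' F'"
    unfolding induced_grading_def by blast
  define e where "e = (\<lambda>g. (if g \<in> F then f g else 0) + (if g \<in> F' then f' g else 0))"
  have "sum e (F \<union> F') = sum f ((F \<union> F') \<inter> F) + sum f' ((F \<union> F') \<inter> F')"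
    unfolding e_def using x(1) y(1) by (simp add: sum.distrib flip: sum.inter_restrict)
  also have "\<dots> = x + y" using x(4) y(4) by (simp add: Int_absorb1)
  finally have "x + y = sum e (F \<union> F')" by simp
  moreover have "\<forall>g\<in>F \<union> F'. e g \<in> S g"
  proof
    fix g assume g: "g \<in> F \<union> F'"
    then have "additive_subgroup (S g)" using x(2) y(2) C sg by blast
    then show "e g \<in> S g" unfolding e_def using x(3) y(3) g
      by (intro addsub_add) (auto simp: addsub_0)
  qed
  ultimately show "x + y \<in> SI C" unfolding induced_grading_def using x(1,2) y(1,2)
    by (intro CollectI exI[of _ "F \<union> F'"] exI[of _ e]) auto
qed

lemma si_hom: "g \<in> C \<Longrightarrow> x \<in> S g \<Longrightarrow> x \<in> SI C"
  unfolding induced_grading_def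
  by (intro CollectI exI[of _ "{g}"] exI[of _ "\<lambda>_. x"]) simp

lemma si_mult:
  assumes C: "C \<subseteq> carrier G" and D: "D \<subseteq> carrier G" and x: "x \<in> SI C" and y: "y \<in> SI D"
  shows "x * y \<in> SI (C <#> D)"
proof -
  obtain F f where xx: "finite F" "F \<subseteq> C" "\<forall>g\<in>F. f g \<in> S g" "x = sum f F"
    using x unfolding induced_grading_def by blast
  obtain F' f' where yy: "finite F'" "F' \<subseteq> D" "\<forall>g\<in>F'. f' g \<in> S g" "y = sum f' F'"
    using y unfolding induced_grading_def by blast
  have CD: "C <#> D \<subseteq> carrier G" using C D by (simp add: set_mult_closed)
  have "x * y = (\<Sum>g\<in>F. \<Sum>h\<in>F'. f g * f' h)" using xx(4) yy(4) by (simp add: sum_product)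
  also have "\<dots> \<in> SI (C <#> D)"
  proof (intro addsub_sum[OF si_addsub[OF CD]])
    fix g h assume g: "g \<in> F" and h: "h \<in> F'"
    have "g \<otimes> h \<in> C <#> D" using g h xx(2) yy(2) unfolding set_mult_def by (auto intro!: UN_I)
    moreover have "f g * f' h \<in> S (g \<otimes> h)"
      by (rule gm) (use g h xx(2,3) yy(2,3) C D in auto)
    ultimately show "f g * f' h \<in> SI (C <#> D)" by (rule si_hom)
  qed
  finally show ?thesis .
qed

end


context nes begin

lemma Q: "group (G Mod N)" by (rule factorgroup_is_group)
lemma carQ: "carrier (G Mod N) = rcosets N" by (simp add: FactGroup_def)

lemma cos_sub: "C \<in> rcosets N \<Longrightarrow> C \<subseteq> carrier G"
  by (rule rcosets_carrier[OF is_group])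
lemma cos_N_mult: "C \<in> rcosets N \<Longrightarrow> N <#> C = C" by (rule rcosets_mult_eq)
lemma cos_mult_N: "C \<in> rcosets N \<Longrightarrow> C <#> N = C"
proof -
  assume C: "C \<in> rcosets N"
  interpret Q: group "G Mod N" by (rule Q)
  show ?thesis using Q.r_one[of C] carQ C by simp
qed
lemma cos_inv_closed: "C \<in> rcosets N \<Longrightarrow> set_inv C \<in> rcosets N" by (rule setinv_closed)
lemma cos_r_inv: "C \<in> rcosets N \<Longrightarrow> C <#> set_inv C = N"
proof -
  assume C: "C \<in> rcosets N"
  interpret Q: group "G Mod N" by (rule Q)
  show ?thesis using Q.r_inv[of C] carQ C inv_FactGroup by simp
qed
lemma cos_inv_inv: "C \<in> rcosets N \<Longrightarrow> set_inv (set_inv C) = C"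
proof -
  assume C: "C \<in> rcosets N"
  interpret Q: group "G Mod N" by (rule Q)
  show ?thesis using Q.inv_inv[of C] carQ C inv_FactGroup Q.inv_closed[of C] by simp
qed
lemma cos_inv_mem: "h \<in> C \<Longrightarrow> inv h \<in> set_inv C"
  unfolding SET_INV_def by blast
lemma one_N: "\<one> \<in> N" by (rule subgroup.one_closed[OF subgroup_axioms])
lemma N_sub: "N \<subseteq> carrier G" by (rule subset)

lemma S1_N: "u \<in> S \<one> \<Longrightarrow> u \<in> SI N" using one_N si_hom by blast

lemma SI_lmul: "C \<in> rcosets N \<Longrightarrow> u \<in> S \<one> \<Longrightarrow> x \<in> SI C \<Longrightarrow> u * x \<in> SI C"
  using si_mult[OF N_sub cos_sub S1_N] cos_N_mult by metis
lemma SI_rmul: "C \<in> rcosets N \<Longrightarrow> u \<in> S \<one> \<Longrightarrow> x \<in> SI C \<Longrightarrow> x * u \<in> SI C"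
  using si_mult[OF cos_sub N_sub _ S1_N] cos_mult_N by metis

lemma S1_mul: "u \<in> S \<one> \<Longrightarrow> v \<in> S \<one> \<Longrightarrow> u * v \<in> S \<one>"
  using gm[of \<one> \<one> u v] by simp
lemma S_lmul: "h \<in> carrier G \<Longrightarrow> u \<in> S \<one> \<Longrightarrow> x \<in> S h \<Longrightarrow> u * x \<in> S h"
  using gm[of \<one> h u x] by simp
lemma S_rmul: "h \<in> carrier G \<Longrightarrow> u \<in> S \<one> \<Longrightarrow> x \<in> S h \<Longrightarrow> x * u \<in> S h"
  using gm[of h \<one> x u] by simp

abbreviation I where "I h \<equiv> ring_prod (S h) (S (inv h))"

lemma I_sub: "h \<in> carrier G \<Longrightarrow> I h \<subseteq> S \<one>"
  by (rule rp_sub[OF sg]) (use gm[of h "inv h"] in auto)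
lemma I_addsub: "h \<in> carrier G \<Longrightarrow> additive_subgroup (I h)"
  by (rule rp_addsub[OF sg]) simp

lemma I_lmul: assumes h: "h \<in> carrier G" and u: "u \<in> S \<one>" and y: "y \<in> I h" shows "u * y \<in> I h"
proof -
  have "I h \<subseteq> {y. u * y \<in> I h}"
  proof (rule rp_sub[OF lmul_addsub[OF I_addsub[OF h]]])
    fix a b assume "a \<in> S h" "b \<in> S (inv h)"
    then show "a * b \<in> {y. u * y \<in> I h}" using S_lmul[OF h u] by (simp add: mult.assoc[symmetric] rp_single)
  qed
  then show ?thesis using y by blast
qed

lemma I_rmul: assumes h: "h \<in> carrier G" and u: "u \<in> S \<one>" and y: "y \<in> I h" shows "y * u \<in> I h"
proof -
  have "I h \<subseteq> {y. y * u \<in> I h}"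
  proof (rule rp_sub[OF rmul_addsub[OF I_addsub[OF h]]])
    fix a b assume "a \<in> S h" "b \<in> S (inv h)"
    then show "a * b \<in> {y. y * u \<in> I h}" using S_rmul[OF _ u, of "inv h"] h by (simp add: mult.assoc rp_single)
  qed
  then show ?thesis using y by blast
qed

lemma I_units_left:
  assumes h: "h \<in> carrier G" and K: "finite K" and a: "\<And>i. i \<in> K \<Longrightarrow> a i \<in> I h"
  shows "\<exists>v\<in>I h. \<forall>i\<in>K. v * a i = a i"
proof (rule tominaga_left[where P = "\<lambda>x. x \<in> I h", OF _ _ _ _ K a])
  show "u + v - v * u \<in> I h" if "u \<in> I h" "v \<in> I h" for u v
    using that I_addsub[OF h] I_rmul[OF h] I_sub[OF h] by (meson addsub_add addsub_diff subsetD)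
  show "0 \<in> I h" by (rule addsub_0[OF I_addsub[OF h]])
  show "x - u * x \<in> I h" if "x \<in> I h" "u \<in> I h" for x u
    using that I_addsub[OF h] I_lmul[OF h] I_sub[OF h] by (meson addsub_diff subsetD)
  show "\<exists>v\<in>I h. v * x = x" if "x \<in> I h" for x
  proof -
    have "x \<in> {r * x | r. r \<in> I h}" using eps2[OF h] that unfolding s_unital_def by blast
    then show ?thesis by force
  qed
qed

lemma I_units_right:
  assumes h: "h \<in> carrier G" and K: "finite K" and a: "\<And>i. i \<in> K \<Longrightarrow> a i \<in> I h"
  shows "\<exists>v\<in>I h. \<forall>i\<in>K. a i * v = a i"
proof (rule tominaga_right[where P = "\<lambda>x. x \<in> I h", OF _ _ _ _ K a])
  show "u + v - u * v \<in> I h" if "u \<in> I h" "v \<in> I h" for u v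
    using that I_addsub[OF h] I_lmul[OF h] I_sub[OF h] by (meson addsub_add addsub_diff subsetD)
  show "0 \<in> I h" by (rule addsub_0[OF I_addsub[OF h]])
  show "x - x * u \<in> I h" if "x \<in> I h" "u \<in> I h" for x u
    using that I_addsub[OF h] I_rmul[OF h] I_sub[OF h] by (meson addsub_diff subsetD)
  show "\<exists>v\<in>I h. x * v = x" if "x \<in> I h" for x
  proof -
    have "x \<in> {x * r | r. r \<in> I h}" using eps2[OF h] that unfolding s_unital_def by blast
    then show ?thesis by force
  qed
qed

lemma hom_unit_left:
  assumes h: "h \<in> carrier G" and x: "x \<in> S h" shows "\<exists>v\<in>I h. v * x = x"
proof -
  have "x \<in> ring_prod (I h) (S h)" using eps1[OF h] x by simp
  then obtain K a b where K: "finite (K::nat set)" "\<forall>i\<in>K. a i \<in> I h \<and> b i \<in> S h" "x = (\<Sum>i\<in>K. a i * b i)"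
    unfolding ring_prod_def by blast
  obtain v where v: "v \<in> I h" "\<forall>i\<in>K. v * a i = a i" using I_units_left[OF h K(1), of a] K(2) by blast
  have "v * x = (\<Sum>i\<in>K. (v * a i) * b i)" using K(3) by (simp add: sum_distrib_left mult.assoc)
  also have "\<dots> = x" using K(3) v(2) by simp
  finally show ?thesis using v(1) by blast
qed

lemma hom_unit_right:
  assumes h: "h \<in> carrier G" and x: "x \<in> S h" shows "\<exists>v\<in>I (inv h). x * v = x"
proof -
  have hi: "inv h \<in> carrier G" using h by simp
  have "x \<in> ring_prod (S h) (I (inv h))"
    using eps1[OF h] x rp_assoc_sub[OF sg[OF hi] sg[OF h], of "S h"] h by auto
  then obtain K a b where K: "finite (K::nat set)" "\<forall>i\<in>K. a i \<in> S h \<and> b i \<in> I (inv h)" "x = (\<Sum>i\<in>K. a i * b i)"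
    unfolding ring_prod_def by blast
  obtain v where v: "v \<in> I (inv h)" "\<forall>i\<in>K. b i * v = b i" using I_units_right[OF hi K(1), of b] K(2) by blast
  have "x * v = (\<Sum>i\<in>K. a i * (b i * v))" using K(3) by (simp add: sum_distrib_right mult.assoc)
  also have "\<dots> = x" using K(3) v(2) by simp
  finally show ?thesis using v(1) by blast
qed

end


context nes begin

abbreviation J where "J C \<equiv> ring_prod (SI C) (SI (set_inv C))"
abbreviation K where "K D \<equiv> ring_prod (SI (set_inv D)) (SI D)"

lemma J_addsub: "C \<in> rcosets N \<Longrightarrow> additive_subgroup (J C)"
  by (rule rp_addsub[OF si_addsub[OF cos_sub[OF cos_inv_closed]]])
lemma K_addsub: "D \<in> rcosets N \<Longrightarrow> additive_subgroup (K D)"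
  by (rule rp_addsub[OF si_addsub[OF cos_sub]])

lemma I_sub_J: "C \<in> rcosets N \<Longrightarrow> h \<in> C \<Longrightarrow> I h \<subseteq> J C"
  by (rule rp_mono) (auto intro: si_hom cos_inv_mem)
lemma I_sub_K: "D \<in> rcosets N \<Longrightarrow> h \<in> D \<Longrightarrow> I (inv h) \<subseteq> K D"
proof -
  assume D: "D \<in> rcosets N" and h: "h \<in> D"
  have hc: "h \<in> carrier G" using cos_sub[OF D] h by blast
  show ?thesis by (rule rp_mono) (use hc h in \<open>auto intro: si_hom cos_inv_mem\<close>)
qed

lemma J_rmul: assumes C: "C \<in> rcosets N" and u: "u \<in> S \<one>" and y: "y \<in> J C" shows "y * u \<in> J C"
proof -
  have "J C \<subseteq> {y. y * u \<in> J C}"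
  proof (rule rp_sub[OF rmul_addsub[OF J_addsub[OF C]]])
    fix a b assume "a \<in> SI C" "b \<in> SI (set_inv C)"
    then show "a * b \<in> {y. y * u \<in> J C}"
      using SI_rmul[OF cos_inv_closed[OF C] u] by (simp add: mult.assoc rp_single)
  qed
  then show ?thesis using y by blast
qed

lemma K_lmul: assumes D: "D \<in> rcosets N" and u: "u \<in> S \<one>" and y: "y \<in> K D" shows "u * y \<in> K D"
proof -
  have "K D \<subseteq> {y. u * y \<in> K D}"
  proof (rule rp_sub[OF lmul_addsub[OF K_addsub[OF D]]])
    fix a b assume "a \<in> SI (set_inv D)" "b \<in> SI D"
    then show "a * b \<in> {y. u * y \<in> K D}"
      using SI_lmul[OF cos_inv_closed[OF D] u] by (simp add: mult.assoc[symmetric] rp_single)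
  qed
  then show ?thesis using y by blast
qed

lemma S1_addsub: "additive_subgroup (S \<one>)" by (rule sg) simp

lemma hom_units_left:
  assumes C: "C \<in> rcosets N" and F: "finite F" and a: "\<And>i. i \<in> F \<Longrightarrow> \<exists>h\<in>C. a i \<in> S h"
  shows "\<exists>u\<in>J C \<inter> S \<one>. \<forall>i\<in>F. u * a i = a i"
proof (rule tominaga_left[where P = "\<lambda>x. \<exists>h\<in>C. x \<in> S h", OF _ _ _ _ F a])
  show "u + v - v * u \<in> J C \<inter> S \<one>" if "u \<in> J C \<inter> S \<one>" "v \<in> J C \<inter> S \<one>" for u v
    using that J_addsub[OF C] J_rmul[OF C] S1_addsub S1_mul by (meson IntD1 IntD2 IntI addsub_add addsub_diff)
  show "0 \<in> J C \<inter> S \<one>" using addsub_0[OF J_addsub[OF C]] addsub_0[OF S1_addsub] by blast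
  show "\<exists>h\<in>C. x - u * x \<in> S h" if H: "\<exists>h\<in>C. x \<in> S h" "u \<in> J C \<inter> S \<one>" for x u
  proof -
    obtain h where h: "h \<in> C" "x \<in> S h" using H(1) by blast
    have hc: "h \<in> carrier G" using cos_sub[OF C] h(1) by blast
    have "x - u * x \<in> S h" using addsub_diff[OF sg[OF hc] h(2) S_lmul[OF hc _ h(2)]] H(2) by blast
    then show ?thesis using h(1) by blast
  qed
  show "\<exists>v\<in>J C \<inter> S \<one>. v * x = x" if H: "\<exists>h\<in>C. x \<in> S h" for x
  proof -
    obtain h where h: "h \<in> C" "x \<in> S h" using H(1) by blast
    have hc: "h \<in> carrier G" using cos_sub[OF C] h(1) by blast
    obtain v where "v \<in> I h" "v * x = x" using hom_unit_left[OF hc h(2)] by blast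
    then show ?thesis using I_sub_J[OF C h(1)] I_sub[OF hc] by blast
  qed
qed

lemma hom_units_right:
  assumes D: "D \<in> rcosets N" and F: "finite F" and a: "\<And>i. i \<in> F \<Longrightarrow> \<exists>h\<in>D. a i \<in> S h"
  shows "\<exists>u\<in>K D \<inter> S \<one>. \<forall>i\<in>F. a i * u = a i"
proof (rule tominaga_right[where P = "\<lambda>x. \<exists>h\<in>D. x \<in> S h", OF _ _ _ _ F a])
  show "u + v - u * v \<in> K D \<inter> S \<one>" if "u \<in> K D \<inter> S \<one>" "v \<in> K D \<inter> S \<one>" for u v
    using that K_addsub[OF D] K_lmul[OF D] S1_addsub S1_mul by (meson IntD1 IntD2 IntI addsub_add addsub_diff)
  show "0 \<in> K D \<inter> S \<one>" using addsub_0[OF K_addsub[OF D]] addsub_0[OF S1_addsub] by blast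
  show "\<exists>h\<in>D. x - x * u \<in> S h" if H: "\<exists>h\<in>D. x \<in> S h" "u \<in> K D \<inter> S \<one>" for x u
  proof -
    obtain h where h: "h \<in> D" "x \<in> S h" using H(1) by blast
    have hc: "h \<in> carrier G" using cos_sub[OF D] h(1) by blast
    have "x - x * u \<in> S h" using addsub_diff[OF sg[OF hc] h(2) S_rmul[OF hc _ h(2)]] H(2) by blast
    then show ?thesis using h(1) by blast
  qed
  show "\<exists>v\<in>K D \<inter> S \<one>. x * v = x" if H: "\<exists>h\<in>D. x \<in> S h" for x
  proof -
    obtain h where h: "h \<in> D" "x \<in> S h" using H(1) by blast
    have hc: "h \<in> carrier G" using cos_sub[OF D] h(1) by blast
    obtain v where "v \<in> I (inv h)" "x * v = x" using hom_unit_right[OF hc h(2)] by blast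
    then show ?thesis using I_sub_K[OF D h(1)] I_sub[of "inv h"] hc by blast
  qed
qed

lemma si_unit_left:
  assumes C: "C \<in> rcosets N" and x: "x \<in> SI C" shows "\<exists>u\<in>J C \<inter> S \<one>. u * x = x"
proof -
  obtain F f where xx: "finite F" "F \<subseteq> C" "\<forall>g\<in>F. f g \<in> S g" "x = sum f F"
    using x unfolding induced_grading_def by blast
  obtain u where u: "u \<in> J C \<inter> S \<one>" "\<forall>i\<in>F. u * f i = f i"
    using hom_units_left[OF C xx(1), of f] xx(2,3) by blast
  have "u * x = (\<Sum>i\<in>F. u * f i)" using xx(4) by (simp add: sum_distrib_left)
  also have "\<dots> = x" using u(2) xx(4) by simp
  finally show ?thesis using u(1) by blast
qed

lemma si_unit_right:
  assumes D: "D \<in> rcosets N" and x: "x \<in> SI D" shows "\<exists>u\<in>K D \<inter> S \<one>. x * u = x"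
proof -
  obtain F f where xx: "finite F" "F \<subseteq> D" "\<forall>g\<in>F. f g \<in> S g" "x = sum f F"
    using x unfolding induced_grading_def by blast
  obtain u where u: "u \<in> K D \<inter> S \<one>" "\<forall>i\<in>F. f i * u = f i"
    using hom_units_right[OF D xx(1), of f] xx(2,3) by blast
  have "x * u = (\<Sum>i\<in>F. f i * u)" using xx(4) by (simp add: sum_distrib_right)
  also have "\<dots> = x" using u(2) xx(4) by simp
  finally show ?thesis using u(1) by blast
qed

lemma si_units_left:
  assumes C: "C \<in> rcosets N" and F: "finite F" and a: "\<And>i. i \<in> F \<Longrightarrow> a i \<in> SI C"
  shows "\<exists>u\<in>J C \<inter> S \<one>. \<forall>i\<in>F. u * a i = a i"
proof (rule tominaga_left[where P = "\<lambda>x. x \<in> SI C", OF _ _ _ _ F a])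
  show "u + v - v * u \<in> J C \<inter> S \<one>" if "u \<in> J C \<inter> S \<one>" "v \<in> J C \<inter> S \<one>" for u v
    using that J_addsub[OF C] J_rmul[OF C] S1_addsub S1_mul by (meson IntD1 IntD2 IntI addsub_add addsub_diff)
  show "0 \<in> J C \<inter> S \<one>" using addsub_0[OF J_addsub[OF C]] addsub_0[OF S1_addsub] by blast
  show "x - u * x \<in> SI C" if "x \<in> SI C" "u \<in> J C \<inter> S \<one>" for x u
    using addsub_diff[OF si_addsub[OF cos_sub[OF C]] that(1) SI_lmul[OF C _ that(1)]] that(2) by blast
  show "\<exists>v\<in>J C \<inter> S \<one>. v * x = x" if "x \<in> SI C" for x
    by (rule si_unit_left[OF C that])
qed

lemma si_units_right:
  assumes D: "D \<in> rcosets N" and F: "finite F" and a: "\<And>i. i \<in> F \<Longrightarrow> a i \<in> SI D"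
  shows "\<exists>u\<in>K D \<inter> S \<one>. \<forall>i\<in>F. a i * u = a i"
proof (rule tominaga_right[where P = "\<lambda>x. x \<in> SI D", OF _ _ _ _ F a])
  show "u + v - u * v \<in> K D \<inter> S \<one>" if "u \<in> K D \<inter> S \<one>" "v \<in> K D \<inter> S \<one>" for u v
    using that K_addsub[OF D] K_lmul[OF D] S1_addsub S1_mul by (meson IntD1 IntD2 IntI addsub_add addsub_diff)
  show "0 \<in> K D \<inter> S \<one>" using addsub_0[OF K_addsub[OF D]] addsub_0[OF S1_addsub] by blast
  show "x - x * u \<in> SI D" if "x \<in> SI D" "u \<in> K D \<inter> S \<one>" for x u
    using addsub_diff[OF si_addsub[OF cos_sub[OF D]] that(1) SI_rmul[OF D _ that(1)]] that(2) by blast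
  show "\<exists>v\<in>K D \<inter> S \<one>. x * v = x" if "x \<in> SI D" for x
    by (rule si_unit_right[OF D that])
qed

lemma Q_eps1: assumes C: "C \<in> rcosets N"
  shows "ring_prod (J C) (SI C) = SI C"
proof
  have CC: "C <#> set_inv C \<subseteq> carrier G" using cos_r_inv[OF C] N_sub by simp
  show "ring_prod (J C) (SI C) \<subseteq> SI C"
  proof (rule rp_sub[OF si_addsub[OF cos_sub[OF C]]])
    fix y c assume y: "y \<in> J C" and c: "c \<in> SI C"
    have "J C \<subseteq> SI (C <#> set_inv C)"
      by (rule rp_sub[OF si_addsub[OF CC]], rule si_mult[OF cos_sub[OF C] cos_sub[OF cos_inv_closed[OF C]]])
    then have "y \<in> SI N" using y cos_r_inv[OF C] by auto
    then have "y * c \<in> SI (N <#> C)" using si_mult[OF N_sub cos_sub[OF C] _ c] by blast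
    then show "y * c \<in> SI C" using cos_N_mult[OF C] by simp
  qed
  show "SI C \<subseteq> ring_prod (J C) (SI C)"
  proof
    fix x assume x: "x \<in> SI C"
    obtain u where "u \<in> J C" "u * x = x" using si_unit_left[OF C x] by blast
    then show "x \<in> ring_prod (J C) (SI C)" using rp_single[of u "J C" x "SI C"] x by simp
  qed
qed

lemma Q_eps2: assumes C: "C \<in> rcosets N"
  shows "s_unital (J C)"
  unfolding s_unital_def
proof (intro ballI conjI)
  fix x assume "x \<in> J C"
  then obtain F a b where x: "finite (F::nat set)" "\<forall>i\<in>F. a i \<in> SI C \<and> b i \<in> SI (set_inv C)" "x = (\<Sum>i\<in>F. a i * b i)"
    unfolding ring_prod_def by blast
  obtain u where u: "u \<in> J C" "\<forall>i\<in>F. u * a i = a i"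
    using si_units_left[OF C x(1), of a] x(2) by blast
  have "u * x = (\<Sum>i\<in>F. (u * a i) * b i)" using x(3) by (simp add: sum_distrib_left mult.assoc)
  also have "\<dots> = x" using x(3) u(2) by simp
  finally show "x \<in> {r * x | r. r \<in> J C}" using u(1) by force
  obtain v where v: "v \<in> K (set_inv C)" "\<forall>i\<in>F. b i * v = b i"
    using si_units_right[OF cos_inv_closed[OF C] x(1), of b] x(2) by blast
  have "x * v = (\<Sum>i\<in>F. a i * (b i * v))" using x(3) by (simp add: sum_distrib_right mult.assoc)
  also have "\<dots> = x" using x(3) v(2) by simp
  finally show "x \<in> {x * r | r. r \<in> J C}" using v(1) cos_inv_inv[OF C] by force
qed

end


context nes begin

lemma cos_eq: "C \<in> rcosets N \<Longrightarrow> g \<in> C \<Longrightarrow> N #> g = C"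
  unfolding RCOSETS_def using repr_independence[OF _ _ subgroup_axioms] by blast

lemma cos_disj: "C \<in> rcosets N \<Longrightarrow> D \<in> rcosets N \<Longrightarrow> C \<noteq> D \<Longrightarrow> C \<inter> D = {}"
  using rcos_disjoint[OF subgroup_axioms] unfolding pairwise_def disjnt_def by blast

lemma Q_dec_ex: "\<exists>F. (\<forall>C. C \<notin> rcosets N \<longrightarrow> F C = 0) \<and> (\<forall>C\<in>rcosets N. F C \<in> SI C)
   \<and> finite {C. F C \<noteq> 0} \<and> x = (\<Sum>C\<in>{C. F C \<noteq> 0}. F C)"
proof -
  obtain f0 where f0: "\<forall>g. g \<notin> carrier G \<longrightarrow> f0 g = 0" "\<forall>g\<in>carrier G. f0 g \<in> S g"
    "finite {g. f0 g \<noteq> 0}" "x = (\<Sum>g\<in>{g. f0 g \<noteq> 0}. f0 g)"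
    using dec[of x] by blast
  define T0 where "T0 = {g. f0 g \<noteq> 0}"
  have T0c: "T0 \<subseteq> carrier G" using f0(1) T0_def by blast
  define F where "F C = (if C \<in> rcosets N then sum f0 (T0 \<inter> C) else 0)" for C
  define Qs where "Qs = (\<lambda>g. N #> g) ` T0"
  have Qsr: "Qs \<subseteq> rcosets N" using T0c Qs_def rcosetsI[OF N_sub] by blast
  have fQ: "finite Qs" using f0(3) T0_def Qs_def by simp
  have supp: "{C. F C \<noteq> 0} \<subseteq> Qs"
  proof
    fix C assume "C \<in> {C. F C \<noteq> 0}"
    then have C: "C \<in> rcosets N" "sum f0 (T0 \<inter> C) \<noteq> 0" unfolding F_def by (auto split: if_splits)
    then obtain g where "g \<in> T0 \<inter> C" by (metis all_not_in_conv sum.empty)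
    then show "C \<in> Qs" using cos_eq[OF C(1)] Qs_def by blast
  qed
  have "(\<Sum>C\<in>{C. F C \<noteq> 0}. F C) = (\<Sum>C\<in>Qs. F C)"
    by (rule sum.mono_neutral_left[OF fQ supp]) auto
  also have "\<dots> = (\<Sum>C\<in>Qs. sum f0 (T0 \<inter> C))" using Qsr F_def by (intro sum.cong) auto
  also have "\<dots> = sum f0 (\<Union>C\<in>Qs. T0 \<inter> C)"
  proof (rule sum.UNION_disjoint[symmetric, OF fQ])
    show "\<forall>C\<in>Qs. finite (T0 \<inter> C)" using f0(3) T0_def by simp
    show "\<forall>C\<in>Qs. \<forall>D\<in>Qs. C \<noteq> D \<longrightarrow> (T0 \<inter> C) \<inter> (T0 \<inter> D) = {}"
      using cos_disj Qsr by blast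
  qed
  also have "(\<Union>C\<in>Qs. T0 \<inter> C) = T0"
    using T0c rcos_self[OF _ subgroup_axioms] Qs_def by blast
  finally have "x = (\<Sum>C\<in>{C. F C \<noteq> 0}. F C)" using f0(4) T0_def by simp
  moreover have "\<forall>C\<in>rcosets N. F C \<in> SI C"
  proof
    fix C assume C: "C \<in> rcosets N"
    have "F C = sum f0 (T0 \<inter> C)" using C F_def by simp
    also have "\<dots> \<in> SI C" unfolding induced_grading_def
      using f0(2,3) T0_def T0c
      by (intro CollectI exI[of _ "T0 \<inter> C"] exI[of _ f0]) auto
    finally show "F C \<in> SI C" .
  qed
  moreover have "finite {C. F C \<noteq> 0}" using finite_subset[OF supp fQ] .
  moreover have "\<forall>C. C \<notin> rcosets N \<longrightarrow> F C = 0" using F_def by simp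
  ultimately show ?thesis by blast
qed

lemma Q_dec_uniq:
  assumes A1: "(\<forall>C. C \<notin> rcosets N \<longrightarrow> F1 C = 0) \<and> (\<forall>C\<in>rcosets N. F1 C \<in> SI C)
   \<and> finite {C. F1 C \<noteq> 0} \<and> x = (\<Sum>C\<in>{C. F1 C \<noteq> 0}. F1 C)"
  and A2: "(\<forall>C. C \<notin> rcosets N \<longrightarrow> F2 C = 0) \<and> (\<forall>C\<in>rcosets N. F2 C \<in> SI C)
   \<and> finite {C. F2 C \<noteq> 0} \<and> x = (\<Sum>C\<in>{C. F2 C \<noteq> 0}. F2 C)"
  shows "F1 = F2"
proof -
  define Q0 where "Q0 = {C. F1 C \<noteq> 0} \<union> {C. F2 C \<noteq> 0}"
  have fQ0: "finite Q0" using A1 A2 Q0_def by simp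
  have Q0r: "Q0 \<subseteq> rcosets N" using A1 A2 Q0_def by blast
  have s1: "(\<Sum>C\<in>Q0. F1 C) = x" using A1 by (metis (mono_tags, lifting) Q0_def fQ0 sum.mono_neutral_left Un_upper1 DiffD2 mem_Collect_eq)
  have s2: "(\<Sum>C\<in>Q0. F2 C) = x" using A2 by (metis (mono_tags, lifting) Q0_def fQ0 sum.mono_neutral_left Un_upper2 DiffD2 mem_Collect_eq)
  have s0: "(\<Sum>C\<in>Q0. F1 C - F2 C) = 0" using s1 s2 by (simp add: sum_subtractf)
  have "\<forall>C\<in>Q0. \<exists>E e. finite E \<and> E \<subseteq> C \<and> (\<forall>g\<in>E. e g \<in> S g) \<and> F1 C - F2 C = sum e E"
  proof
    fix C assume C: "C \<in> Q0"
    then have Cr: "C \<in> rcosets N" using Q0r by blast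
    have "F1 C - F2 C \<in> SI C" using A1 A2 Cr addsub_diff[OF si_addsub[OF cos_sub[OF Cr]]] by blast
    then show "\<exists>E e. finite E \<and> E \<subseteq> C \<and> (\<forall>g\<in>E. e g \<in> S g) \<and> F1 C - F2 C = sum e E"
      unfolding induced_grading_def by blast
  qed
  then obtain E e where Ee: "\<And>C. C \<in> Q0 \<Longrightarrow> finite (E C) \<and> E C \<subseteq> C \<and> (\<forall>g\<in>E C. e C g \<in> S g) \<and> F1 C - F2 C = sum (e C) (E C)"
    by metis
  define d where "d g = (if N #> g \<in> Q0 \<and> g \<in> E (N #> g) then e (N #> g) g else 0)" for g
  have key: "C \<in> Q0 \<Longrightarrow> g \<in> E C \<Longrightarrow> N #> g = C" for C g
    using cos_eq Q0r Ee by blast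
  have dC: "C \<in> Q0 \<Longrightarrow> g \<in> E C \<Longrightarrow> d g = e C g" for C g
    using key d_def by simp
  define Et where "Et = (\<Union>C\<in>Q0. E C)"
  have fEt: "finite Et" using Et_def fQ0 Ee by blast
  have Etc: "Et \<subseteq> carrier G" using Et_def Ee Q0r cos_sub by blast
  have dz: "g \<notin> Et \<Longrightarrow> d g = 0" for g using d_def Et_def by auto
  have suppd: "{g. d g \<noteq> 0} \<subseteq> Et" using dz by blast
  have "sum d Et = (\<Sum>C\<in>Q0. sum d (E C))" unfolding Et_def
  proof (rule sum.UNION_disjoint[OF fQ0])
    show "\<forall>C\<in>Q0. finite (E C)" using Ee by blast
    show "\<forall>C\<in>Q0. \<forall>D\<in>Q0. C \<noteq> D \<longrightarrow> E C \<inter> E D = {}"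
    proof (intro ballI impI)
      fix C D assume "C \<in> Q0" "D \<in> Q0" "C \<noteq> D"
      then have "C \<inter> D = {}" using cos_disj Q0r by blast
      then show "E C \<inter> E D = {}" using Ee \<open>C \<in> Q0\<close> \<open>D \<in> Q0\<close> by blast
    qed
  qed
  also have "\<dots> = (\<Sum>C\<in>Q0. F1 C - F2 C)"
    by (rule sum.cong[OF refl]) (use Ee dC in simp)
  finally have sd: "sum d Et = 0" using s0 by simp
  have d0: "d g = 0" for g
  proof (rule indep)
    show "\<forall>g. g \<notin> carrier G \<longrightarrow> d g = 0" using dz Etc by blast
    show "\<forall>g\<in>carrier G. d g \<in> S g"
    proof
      fix g assume g: "g \<in> carrier G"
      show "d g \<in> S g"
      proof (cases "N #> g \<in> Q0 \<and> g \<in> E (N #> g)")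
        case True then show ?thesis using d_def Ee by simp
      next
        case False then show ?thesis unfolding d_def using addsub_0[OF sg[OF g]] by auto
      qed
    qed
    show "finite {g. d g \<noteq> 0}" using finite_subset[OF suppd fEt] .
    show "(\<Sum>g\<in>{g. d g \<noteq> 0}. d g) = 0"
      using sum.mono_neutral_left[OF fEt suppd, of d] sd by simp
  qed
  show "F1 = F2"
  proof
    fix C show "F1 C = F2 C"
    proof (cases "C \<in> Q0")
      case True
      have "F1 C - F2 C = sum (e C) (E C)" using Ee True by blast
      also have "\<dots> = sum d (E C)" using dC True by simp
      also have "\<dots> = 0" using d0 by simp
      finally show ?thesis by simp
    next
      case False then show ?thesis using Q0_def by simp
    qed
  qed
qed

lemma Q_graded: "graded_ring (G Mod N) SI"
  unfolding graded_ring_def carQ mult_FactGroup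
proof (intro conjI ballI allI)
  show "additive_subgroup (SI C)" if "C \<in> rcosets N" for C
    by (rule si_addsub[OF cos_sub[OF that]])
  show "ring_prod (SI C) (SI D) \<subseteq> SI (C <#> D)" if "C \<in> rcosets N" "D \<in> rcosets N" for C D
  proof (rule rp_sub)
    show "additive_subgroup (SI (C <#> D))"
      by (rule si_addsub[OF cos_sub[OF setmult_closed[OF that]]])
    show "a * b \<in> SI (C <#> D)" if "a \<in> SI C" "b \<in> SI D" for a b
      by (rule si_mult[OF cos_sub cos_sub]) (use that \<open>C \<in> rcosets N\<close> \<open>D \<in> rcosets N\<close> in auto)
  qed
  fix x
  show "\<exists>!F. (\<forall>C. C \<notin> rcosets N \<longrightarrow> F C = 0) \<and> (\<forall>C\<in>rcosets N. F C \<in> SI C)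
   \<and> finite {C. F C \<noteq> 0} \<and> x = (\<Sum>C\<in>{C. F C \<noteq> 0}. F C)"
    using Q_dec_ex[of x] Q_dec_uniq[of _ x] by blast
qed

lemma Q_nes: "nearly_epsilon_strong (G Mod N) SI"
  unfolding nearly_epsilon_strong_def
proof (intro conjI ballI)
  show "graded_ring (G Mod N) SI" by (rule Q_graded)
  fix C assume C: "C \<in> carrier (G Mod N)"
  then have Cr: "C \<in> rcosets N" using carQ by simp
  show "ring_prod (ring_prod (SI C) (SI (inv\<^bsub>G Mod N\<^esub> C))) (SI C) = SI C"
    using Q_eps1[OF Cr] inv_FactGroup[OF C] by simp
  show "s_unital (ring_prod (SI C) (SI (inv\<^bsub>G Mod N\<^esub> C)))"
    using Q_eps2[OF Cr] inv_FactGroup[OF C] by simp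
qed

end

theorem proposition5p8:
  fixes G :: "('g, 'b) monoid_scheme" and N :: "'g set" and S :: "'g \<Rightarrow> 'a::ring set"
  assumes "group G" and "N \<lhd> G" and "nearly_epsilon_strong G S"
  shows "nearly_epsilon_strong (G Mod N) (induced_grading S)"
proof -
  interpret nes N G S by (intro nes.intro assms(2)) (simp add: nes_axioms_def assms(3))
  show ?thesis by (rule Q_nes)
qed


end
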